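(* Let $X$ be a metric space, $Y$ a complete metric space, and $f_0\colon X \to Y$ an embedding such that $f_0^{-1}\colon f_0(X) \to X$ is uniformly continuous; put $Y_0 = f_0(X)$. Consider the infinite two-player game in which, for each move number $k \geq 1$: Player I chooses a number $\varepsilon_k > 0$ (possibly depending on all previous moves); then Player II chooses a map $g_k\colon Y_{k-1} \to Y$ which is an embedding, satisfies $d_Y(g_k(y), y) < \varepsilon_k$ for all $y \in Y_{k-1}$, and has uniformly continuous inverse $g_k^{-1}\colon g_k(Y_{k-1}) \to Y_{k-1}$; one then sets $f_k = g_k \circ f_{k-1}$ and $Y_k = g_k(Y_{k-1}) = f_k(X)$. Player I wins if the pointwise limit $f = \lim_{k\to\infty} f_k\colon X \to Y$ exists and is an embedding of $X$ into $Y$. Then Player I has a winning strategy.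
   Context: An embedding is a continuous injective map that is a homeomorphism onto its image. *)

theory Defs
  imports "HOL-Analysis.Analysis"
begin

definition embedding_on :: "'a::topological_space set \<Rightarrow> ('a \<Rightarrow> 'b::topological_space) \<Rightarrow> bool" where
  "embedding_on S f \<longleftrightarrow> (\<exists>g. homeomorphism S (f ` S) f g)"

text \<open>Stage maps of a play: f_0 given, f_(k+1) = g_k o f_k, where g_k is
  Player II's move number k+1 (moves are indexed from 0 here).\<close>
fun stage :: "('a \<Rightarrow> 'b) \<Rightarrow> (nat \<Rightarrow> 'b \<Rightarrow> 'b) \<Rightarrow> nat \<Rightarrow> 'a \<Rightarrow> 'b" where
  "stage f0 g 0 = f0"
| "stage f0 g (Suc k) = g k \<circ> stage f0 g k"

text \<open>The history of the first k moves of Player II, each move restricted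
  to its domain Y_j = f_j(X) (values outside the domain are irrelevant).\<close>
definition history :: "'a set \<Rightarrow> ('a \<Rightarrow> 'b) \<Rightarrow> (nat \<Rightarrow> 'b \<Rightarrow> 'b) \<Rightarrow> nat \<Rightarrow> ('b \<Rightarrow> 'b) list" where
  "history X f0 g k = map (\<lambda>j. restrict (g j) (stage f0 g j ` X)) [0..<k]"

text \<open>A play g of Player II is legal against the Player I strategy sigma
  (which maps the history of II's previous moves to epsilon).\<close>
definition legal_play :: "'a::metric_space set \<Rightarrow> ('a \<Rightarrow> 'b::metric_space) \<Rightarrow> (('b \<Rightarrow> 'b) list \<Rightarrow> real)
    \<Rightarrow> (nat \<Rightarrow> 'b \<Rightarrow> 'b) \<Rightarrow> bool" where
  "legal_play X f0 \<sigma> g \<longleftrightarrow>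
     (\<forall>k. let Yk = stage f0 g k ` X; \<epsilon> = \<sigma> (history X f0 g k) in
          embedding_on Yk (g k)
        \<and> (\<forall>y\<in>Yk. dist (g k y) y < \<epsilon>)
        \<and> uniformly_continuous_on (g k ` Yk) (inv_into Yk (g k)))"

definition player_I_wins :: "'a::metric_space set \<Rightarrow> ('a \<Rightarrow> 'b::metric_space) \<Rightarrow> (nat \<Rightarrow> 'b \<Rightarrow> 'b) \<Rightarrow> bool" where
  "player_I_wins X f0 g \<longleftrightarrow>
     (\<exists>f. (\<forall>x\<in>X. (\<lambda>k. stage f0 g k x) \<longlonglongrightarrow> f x) \<and> embedding_on X f)"

end

theory Submission
  imports Defs
begin

lemma geom_conv:
  fixes a :: "nat \<Rightarrow> 'b::complete_space"
  assumes A: "\<And>k. i \<le> k \<Longrightarrow> dist (a (Suc k)) (a k) \<le> B * (1/2)^(k-i)"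
  shows "convergent a" and "dist (lim a) (a i) \<le> 2*B"
proof -
  have B0: "0 \<le> B" using A[of i] by (metis order_trans zero_le_dist order_refl diff_self_eq_0 power_0 mult_1_right)
  have S: "dist (a m) (a n) \<le> 2*B*(1/2)^(n-i) - 2*B*(1/2)^(m-i)" if "i \<le> n" "n \<le> m" for m n
    using that(2)
  proof (induction m rule: dec_induct)
    case base
    then show ?case by simp
  next
    case (step m)
    have im: "i \<le> m" using that step by linarith
    have eq: "(1/2::real)^(Suc m - i) = (1/2)^(m-i)/2" using im by (simp add: Suc_diff_le)
    have "dist (a (Suc m)) (a n) \<le> dist (a (Suc m)) (a m) + dist (a m) (a n)" by (rule dist_triangle)
    also have "\<dots> \<le> B*(1/2)^(m-i) + (2*B*(1/2)^(n-i) - 2*B*(1/2)^(m-i))"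
      using A[OF im] step by (intro add_mono) auto
    also have "\<dots> = 2*B*(1/2)^(n-i) - 2*B*(1/2)^(Suc m-i)" by (simp add: eq algebra_simps)
    finally show ?case .
  qed
  have S2: "dist (a m) (a n) \<le> 2*B*(1/2)^(n-i)" if "i \<le> n" "n \<le> m" for m n
  proof -
    have "0 \<le> 2*B*(1/2::real)^(m-i)" using B0 by simp
    then show ?thesis using S[OF that] by linarith
  qed
  have "Cauchy a"
    unfolding Cauchy_def
  proof (intro allI impI)
    fix e :: real assume e: "e > 0"
    obtain N where N: "(1/2::real)^N < e/(2*B+1)" using real_arch_pow_inv[of "e/(2*B+1)" "1/2"] e B0 by auto
    have key: "dist (a m) (a n) < e" if "N + i \<le> n" "n \<le> m" for m n
    proof -
      have "dist (a m) (a n) \<le> 2*B*(1/2)^(n-i)" using S2 that by simp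
      also have "\<dots> \<le> 2*B*(1/2)^N" using B0 that by (intro mult_left_mono power_decreasing) auto
      also have "\<dots> \<le> (2*B+1)*(1/2)^N" by (intro mult_right_mono) auto
      also have "\<dots> < e" using N B0 by (simp add: field_simps)
      finally show ?thesis .
    qed
    show "\<exists>M. \<forall>m\<ge>M. \<forall>n\<ge>M. dist (a m) (a n) < e"
      by (rule exI[of _ "N+i"]) (metis key dist_commute nle_le)
  qed
  then show C: "convergent a" by (rule Cauchy_convergent)
  then have "a \<longlonglongrightarrow> lim a" by (simp add: convergent_LIMSEQ_iff)
  then have "(\<lambda>m. dist (a m) (a i)) \<longlonglongrightarrow> dist (lim a) (a i)" by (intro tendsto_intros)
  then show "dist (lim a) (a i) \<le> 2*B"
    by (rule LIMSEQ_le_const2) (use S2[of i] in \<open>auto intro!: exI[of _ i]\<close>)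
qed


definition stageL :: "('a \<Rightarrow> 'b) \<Rightarrow> ('b \<Rightarrow> 'b) list \<Rightarrow> 'a \<Rightarrow> 'b" where
  "stageL f0 hs = foldl (\<lambda>F h. h \<circ> F) f0 hs"

definition Pgood :: "'a::metric_space set \<Rightarrow> ('a \<Rightarrow> 'b::metric_space) \<Rightarrow> nat \<Rightarrow> real \<Rightarrow> bool" where
  "Pgood X F n \<delta> \<longleftrightarrow> \<delta> > 0 \<and> (\<forall>x\<in>X. \<forall>x'\<in>X. dist (F x) (F x') < \<delta> \<longrightarrow> dist x x' < (1/2)^n)"

definition Dl :: "'a::metric_space set \<Rightarrow> ('a \<Rightarrow> 'b::metric_space) \<Rightarrow> ('b \<Rightarrow> 'b) list \<Rightarrow> real" where
  "Dl X f0 hs = (if \<exists>\<delta>. Pgood X (stageL f0 hs) (length hs) \<delta>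
     then SOME \<delta>. Pgood X (stageL f0 hs) (length hs) \<delta> else 1)"

definition sig :: "'a::metric_space set \<Rightarrow> ('a \<Rightarrow> 'b::metric_space) \<Rightarrow> ('b \<Rightarrow> 'b) list \<Rightarrow> real" where
  "sig X f0 hs = Min ((\<lambda>i. Dl X f0 (take i hs) / 2^(length hs - i + 3)) ` {0..length hs})"

lemma stageL_snoc: "stageL f0 (hs @ [h]) = h \<circ> stageL f0 hs"
  by (simp add: stageL_def)

lemma history_Suc: "history X f0 g (Suc k) = history X f0 g k @ [restrict (g k) (stage f0 g k ` X)]"
  by (simp add: history_def)

lemma length_history: "length (history X f0 g k) = k"
  by (simp add: history_def)

lemma take_history: "i \<le> k \<Longrightarrow> take i (history X f0 g k) = history X f0 g i"
  by (simp add: history_def take_map min_def)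

lemma stageL_history: "x \<in> X \<Longrightarrow> stageL f0 (history X f0 g k) x = stage f0 g k x"
  by (induct k) (simp_all add: history_Suc stageL_snoc, simp add: history_def stageL_def)

lemma Dl_pos: "Dl X f0 hs > 0"
proof (cases "\<exists>\<delta>. Pgood X (stageL f0 hs) (length hs) \<delta>")
  case True
  then have "Pgood X (stageL f0 hs) (length hs) (Dl X f0 hs)" by (simp add: Dl_def someI_ex)
  then show ?thesis by (simp add: Pgood_def)
qed (simp add: Dl_def)

lemma Dl_good: "\<exists>\<delta>. Pgood X (stageL f0 hs) (length hs) \<delta> \<Longrightarrow> Pgood X (stageL f0 hs) (length hs) (Dl X f0 hs)"
  by (simp add: Dl_def someI_ex)

lemma sig_pos: "sig X f0 hs > 0"
  unfolding sig_def by (subst Min_gr_iff) (auto intro!: divide_pos_pos Dl_pos)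

lemma sig_le: "i \<le> length hs \<Longrightarrow> sig X f0 hs \<le> Dl X f0 (take i hs) / 2^(length hs - i + 3)"
  unfolding sig_def by (rule Min_le) auto

lemma emb_inj: "embedding_on S f \<Longrightarrow> inj_on f S"
  unfolding embedding_on_def homeomorphism_def inj_on_def by metis

lemma emb_cont: "embedding_on S f \<Longrightarrow> continuous_on S f"
  unfolding embedding_on_def homeomorphism_def by blast


context
  fixes X :: "'a::metric_space set" and f0 :: "'a \<Rightarrow> 'b::complete_space" and g :: "nat \<Rightarrow> 'b \<Rightarrow> 'b"
  assumes emb: "embedding_on X f0"
    and uc: "uniformly_continuous_on (f0 ` X) (inv_into X f0)"
    and L: "legal_play X f0 (sig X f0) g"
begin

lemma legal_k: "embedding_on (stage f0 g k ` X) (g k) \<and>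
   (\<forall>y\<in>stage f0 g k ` X. dist (g k y) y < sig X f0 (history X f0 g k)) \<and>
   uniformly_continuous_on (g k ` stage f0 g k ` X) (inv_into (stage f0 g k ` X) (g k))"
  using L unfolding legal_play_def Let_def by blast

lemma step_bound: "x \<in> X \<Longrightarrow> dist (stage f0 g (Suc k) x) (stage f0 g k x) < sig X f0 (history X f0 g k)"
  using legal_k[of k] by simp

lemma e_bound:
  assumes "j \<le> i" "i \<le> k"
  shows "sig X f0 (history X f0 g k) \<le> Dl X f0 (history X f0 g j) / 2^(i-j+3) * (1/2)^(k-i)"
proof -
  have "sig X f0 (history X f0 g k) \<le> Dl X f0 (take j (history X f0 g k)) / 2^(length (history X f0 g k) - j + 3)"
    by (rule sig_le) (use assms in \<open>simp add: length_history\<close>)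
  also have "\<dots> = Dl X f0 (history X f0 g j) / 2^(k-j+3)"
    using assms by (simp add: take_history length_history)
  also have "(2::real)^(k-j+3) = 2^(i-j+3) * 2^(k-i)"
  proof -
    have "k-j+3 = (i-j+3)+(k-i)" using assms by simp
    then show ?thesis by (metis power_add)
  qed
  finally show ?thesis by (simp add: power_one_over)
qed

lemma ucinv: "\<eta> > 0 \<Longrightarrow> \<exists>\<delta>>0. \<forall>x\<in>X. \<forall>x'\<in>X. dist (stage f0 g k x) (stage f0 g k x') < \<delta> \<longrightarrow> dist x x' < \<eta>"
proof (induct k arbitrary: \<eta>)
  case 0
  from uc[unfolded uniformly_continuous_on_def, rule_format, OF 0] obtain d where
    d: "d>0" "\<forall>x\<in>f0`X. \<forall>x'\<in>f0`X. dist x' x < d \<longrightarrow> dist (inv_into X f0 x') (inv_into X f0 x) < \<eta>"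
    by blast
  have inj: "inj_on f0 X" using emb by (rule emb_inj)
  show ?case
  proof (intro exI[of _ d] conjI ballI impI)
    fix x x' assume x: "x \<in> X" "x' \<in> X" "dist (stage f0 g 0 x) (stage f0 g 0 x') < d"
    then have "dist (inv_into X f0 (f0 x)) (inv_into X f0 (f0 x')) < \<eta>" using d(2) by simp
    then show "dist x x' < \<eta>" using x inj by (simp add: inv_into_f_f)
  qed (use d in auto)
next
  case (Suc k)
  let ?Y = "stage f0 g k ` X"
  have embk: "embedding_on ?Y (g k)" and uck: "uniformly_continuous_on (g k ` ?Y) (inv_into ?Y (g k))"
    using legal_k[of k] by auto
  have inj: "inj_on (g k) ?Y" using embk by (rule emb_inj)
  obtain \<delta> where \<delta>: "\<delta> > 0" "\<forall>x\<in>X. \<forall>x'\<in>X. dist (stage f0 g k x) (stage f0 g k x') < \<delta> \<longrightarrow> dist x x' < \<eta>"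
    using Suc by blast
  from uck[unfolded uniformly_continuous_on_def, rule_format, OF \<delta>(1)] obtain d where
    d: "d>0" "\<forall>x\<in>g k ` ?Y. \<forall>x'\<in>g k ` ?Y. dist x' x < d \<longrightarrow> dist (inv_into ?Y (g k) x') (inv_into ?Y (g k) x) < \<delta>"
    by blast
  show ?case
  proof (intro exI[of _ d] conjI ballI impI)
    fix x x' assume x: "x \<in> X" "x' \<in> X" "dist (stage f0 g (Suc k) x) (stage f0 g (Suc k) x') < d"
    then have "dist (inv_into ?Y (g k) (g k (stage f0 g k x))) (inv_into ?Y (g k) (g k (stage f0 g k x'))) < \<delta>"
      using d(2) by simp
    then have "dist (stage f0 g k x) (stage f0 g k x') < \<delta>" using x inj by (simp add: inv_into_f_f)
    then show "dist x x' < \<eta>" using \<delta>(2) x by blast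
  qed (use d in auto)
qed

lemma dd_good: "Pgood X (stage f0 g i) i (Dl X f0 (history X f0 g i))"
proof -
  have eq: "Pgood X (stageL f0 (history X f0 g i)) (length (history X f0 g i)) \<delta> = Pgood X (stage f0 g i) i \<delta>" for \<delta>
    by (simp add: Pgood_def stageL_history length_history)
  have "\<exists>\<delta>. Pgood X (stage f0 g i) i \<delta>" using ucinv[of "(1/2)^i" i] by (auto simp: Pgood_def)
  then show ?thesis using Dl_good[of X f0 "history X f0 g i"] eq by simp
qed

lemma conv:
  assumes x: "x \<in> X" and ji: "j \<le> i"
  shows "convergent (\<lambda>k. stage f0 g k x)"
    and "dist (lim (\<lambda>k. stage f0 g k x)) (stage f0 g i x) \<le> 2 * (Dl X f0 (history X f0 g j) / 2^(i-j+3))"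
proof -
  have A: "dist (stage f0 g (Suc k) x) (stage f0 g k x) \<le> (Dl X f0 (history X f0 g j) / 2^(i-j+3)) * (1/2)^(k-i)"
    if "i \<le> k" for k
    using step_bound[OF x, of k] e_bound[OF ji that] by linarith
  show "convergent (\<lambda>k. stage f0 g k x)"
    by (rule geom_conv(1)[of i _ "Dl X f0 (history X f0 g j) / 2^(i-j+3)"]) (use A in auto)
  show "dist (lim (\<lambda>k. stage f0 g k x)) (stage f0 g i x) \<le> 2 * (Dl X f0 (history X f0 g j) / 2^(i-j+3))"
    by (rule geom_conv(2)[of i "\<lambda>k. stage f0 g k x" "Dl X f0 (history X f0 g j) / 2^(i-j+3)"]) (use A in auto)
qed

lemma cont_stage: "continuous_on X (stage f0 g k)"
proof (induct k)
  case 0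
  then show ?case using emb_cont[OF emb] by simp
next
  case (Suc k)
  have "continuous_on (stage f0 g k ` X) (g k)" using legal_k[of k] emb_cont by blast
  then show ?case using continuous_on_compose[OF Suc] by simp
qed

lemma wins: "player_I_wins X f0 g"
proof -
  define f where "f x = lim (\<lambda>k. stage f0 g k x)" for x
  have lim: "(\<lambda>k. stage f0 g k x) \<longlonglongrightarrow> f x" if "x \<in> X" for x
    using conv(1)[OF that order_refl] unfolding f_def by (simp add: convergent_LIMSEQ_iff)
  define D0 where "D0 = Dl X f0 (history X f0 g 0)"
  have D0: "D0 > 0" unfolding D0_def by (rule Dl_pos)
  have ul: "uniform_limit X (\<lambda>k. stage f0 g k) f sequentially"
    unfolding uniform_limit_sequentially_iff
  proof (intro allI impI)
    fix e :: real assume e: "e > 0"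
    obtain N where N: "(1/2::real)^N < e/(D0+1)" using real_arch_pow_inv[of "e/(D0+1)" "1/2"] e D0 by auto
    show "\<exists>N. \<forall>n\<ge>N. \<forall>x\<in>X. dist (stage f0 g n x) (f x) < e"
    proof (intro exI[of _ N] allI impI ballI)
      fix n x assume n: "N \<le> n" and x: "x \<in> X"
      have "dist (stage f0 g n x) (f x) \<le> 2 * (D0 / 2^(n-0+3))"
        using conv(2)[OF x, of 0 n] unfolding f_def D0_def by (simp add: dist_commute)
      also have "\<dots> \<le> D0 * (1/2)^n" using D0 by (simp add: power_add field_simps power_one_over)
      also have "\<dots> \<le> D0 * (1/2)^N" using D0 n by (intro mult_left_mono power_decreasing) auto
      also have "\<dots> \<le> (D0+1) * (1/2)^N" by (intro mult_right_mono) auto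
      also have "\<dots> < e" using N D0 by (simp add: field_simps)
      finally show "dist (stage f0 g n x) (f x) < e" .
    qed
  qed
  have contf: "continuous_on X f"
    by (rule uniform_limit_theorem[OF _ ul]) (auto simp: cont_stage)
  have close: "dist (f x) (stage f0 g i x) \<le> Dl X f0 (history X f0 g i) / 4" if "x \<in> X" for x i
    using conv(2)[OF that order_refl, of i] unfolding f_def by simp
  have ucf: "\<exists>d>0. \<forall>x\<in>X. \<forall>x'\<in>X. dist (f x) (f x') < d \<longrightarrow> dist x x' < \<eta>" if eta: "\<eta> > 0" for \<eta>
  proof -
    obtain i where i: "(1/2::real)^i < \<eta>" using real_arch_pow_inv[of \<eta> "1/2"] eta by auto
    define Di where "Di = Dl X f0 (history X f0 g i)"
    have P: "Pgood X (stage f0 g i) i Di" unfolding Di_def by (rule dd_good)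
    show ?thesis
    proof (intro exI[of _ "Di/2"] conjI ballI impI)
      show "Di/2 > 0" using P by (simp add: Pgood_def)
      fix x x' assume x: "x \<in> X" "x' \<in> X" "dist (f x) (f x') < Di/2"
      have "dist (stage f0 g i x) (stage f0 g i x') \<le> dist (stage f0 g i x) (f x) + dist (f x) (f x') + dist (f x') (stage f0 g i x')"
        using dist_triangle[of "stage f0 g i x" "stage f0 g i x'" "f x"] dist_triangle[of "f x" "stage f0 g i x'" "f x'"]
        by linarith
      also have "\<dots> < Di" using close[OF x(1), of i] close[OF x(2), of i] x(3) unfolding Di_def[symmetric]
        by (simp add: dist_commute)
      finally have "dist (stage f0 g i x) (stage f0 g i x') < Di" .
      then have "dist x x' < (1/2)^i" using P x by (auto simp: Pgood_def)
      then show "dist x x' < \<eta>" using i by linarith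
    qed
  qed
  have inj: "inj_on f X"
  proof (rule inj_onI)
    fix x x' assume x: "x \<in> X" "x' \<in> X" "f x = f x'"
    have H: "dist x x' < \<eta>" if "\<eta> > 0" for \<eta> using ucf[OF that] x by auto
    show "x = x'"
    proof (rule ccontr)
      assume "x \<noteq> x'"
      then have "dist x x' > 0" by simp
      then show False using H[of "dist x x'"] by simp
    qed
  qed
  have ucinvf: "uniformly_continuous_on (f ` X) (inv_into X f)"
    unfolding uniformly_continuous_on_def
  proof (intro allI impI)
    fix e :: real assume e: "e > 0"
    obtain d where d: "d > 0" "\<forall>x\<in>X. \<forall>x'\<in>X. dist (f x) (f x') < d \<longrightarrow> dist x x' < e" using ucf[OF e] by blast
    show "\<exists>d>0. \<forall>x\<in>f ` X. \<forall>x'\<in>f ` X. dist x' x < d \<longrightarrow> dist (inv_into X f x') (inv_into X f x) < e"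
      using d inj by (auto simp: inv_into_f_f)
  qed
  have "homeomorphism X (f ` X) f (inv_into X f)"
    unfolding homeomorphism_def
    using contf uniformly_continuous_imp_continuous[OF ucinvf] inj
    by (auto simp: inv_into_f_f f_inv_into_f inv_into_into image_iff)
  then have "embedding_on X f" unfolding embedding_on_def by blast
  then show ?thesis unfolding player_I_wins_def using lim by blast
qed

end

theorem theorem3p1:
  fixes X :: "'a::metric_space set" and f0 :: "'a \<Rightarrow> 'b::complete_space"
  assumes "embedding_on X f0"
    and "uniformly_continuous_on (f0 ` X) (inv_into X f0)"
  shows "\<exists>\<sigma> :: ('b \<Rightarrow> 'b) list \<Rightarrow> real.
           (\<forall>h. \<sigma> h > 0) \<and> (\<forall>g. legal_play X f0 \<sigma> g \<longrightarrow> player_I_wins X f0 g)"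
  using wins[OF assms] sig_pos by blast

end
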